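(* Let $\mathcal A\subset\mathbb R^n$ be a finite set with diameter $D_{\mathcal A}$, let $\mathcal X=\mathrm{conv}(\mathcal A)$, let $f$ have $L$-Lipschitz gradient, and let $\eta\in(1,2)$. Run the AC-FW algorithm with the pairwise Frank-Wolfe subroutine and a damping sequence satisfying Condition (D), with $L_0>0$. Then the subroutine satisfies parts (i) and (ii) of Condition (S); more precisely, for every $t\ge0$, $$|\mathcal G\cap\mathcal I_\eta\cap[t]|\ge\frac{t+1}{3|\mathcal A|!+1}-\left\lfloor\log_\eta\!\left(\frac{L}{rL_0}\right)\right\rfloor.$$ If additionally $f$ is convex, then part (iii) of Condition (S) holds with $R=1$.
   Context: $D_{\mathcal A}:=\max_{x,y\in\mathcal A}\|x-y\|_2$; $f:\mathbb R^n\to\mathbb R$ is differentiable with $\|\nabla f(x)-\nabla f(y)\|_2\le L\|x-y\|_2$. $x^\star$ is an optimal solution of $\min_{x\in\mathcal X}f(x)$. For $x\ne y$, $\ell(x,y):=2|f(y)-f(x)-\nabla f(x)^\top(y-x)|/\|y-x\|_2^2$, $\ell(x,x):=0$. AC-FW algorithm: given $\{r_t\}_{t\ge0}$ and a subroutine, pick $x_{-1}\in\mathcal A$, $x_0\in\arg\min_{v\in\mathcal A}\nabla f(x_{-1})^\top v$, $L_0:=\ell(x_{-1},x_0)$. For $t=0,1,\dots$: $v_t\in\arg\min_{v\in\mathcal A}\nabla f(x_t)^\top v$; the subroutine returns $(d_t,\gamma_t^{\max})$; $\gamma_t:=\min\{\nabla f(x_t)^\top d_t/(L_t\|d_t\|_2^2),\gamma_t^{\max}\}$;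 $\bar x_{t+1}:=x_t-\gamma_td_t$; $L_{t+1}:=\max\{\ell(x_t,\bar x_{t+1}),r_tL_t\}$; $x_{t+1}:=\bar x_{t+1}$ if $f(\bar x_{t+1})<f(x_t)$, else $x_{t+1}:=x_t$. Pairwise Frank-Wolfe subroutine: it maintains weights $\alpha_{s,t}\ge0$ ($s\in\mathcal A$) with active set $\mathcal S_t:=\{s\in\mathcal A:\alpha_{s,t}>0\}$ and $x_t=\sum_{s\in\mathcal A}\alpha_{s,t}s$; initially $\mathcal S_0=\{x_0\}$, $\alpha_{x_0,0}=1$. At iteration $t$: $s_t\in\arg\max_{s\in\mathcal S_t}\nabla f(x_t)^\top s$, $d_t:=s_t-v_t$, $\gamma_t^{\max}:=\alpha_{s_t,t}$. If $x_{t+1}=\bar x_{t+1}$ (accepted), then $\alpha_{s_t,t+1}:=\alpha_{s_t,t}-\gamma_t$, $\alpha_{v_t,t+1}:=\alpha_{v_t,t}+\gamma_t$, and $\alpha_{s,t+1}:=\alpha_{s,t}$ for $s\notin\{s_t,v_t\}$; otherwise $\alpha_{\cdot,t+1}:=\alpha_{\cdot,t}$. Then $\mathcal S_{t+1}:=\{s:\alpha_{s,t+1}>0\}$. $[t]:=\{0,\dots,t\}$; $\mathcal I_\eta:=\{t\ge0:L_{t+1}\le\eta L_t\}$; $\mathcal G:=\{t\ge0:\gamma_t^{\max}\ge1\text{ or }\gamma_t<\gamma_t^{\max}\}$. Condition (D): $r_t\in(0,1]$ for all $t$ and $r:=\prod_{t\ge0}r_t\in(0,1]$. Condition (S): for all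 $t\ge0$: (i) $\|d_t\|_2\le D_{\mathcal A}$ and $x_t-\gamma d_t\in\mathcal X$ for all $\gamma\in[0,\gamma_t^{\max}]$; (ii) $\mathcal G$ is infinite; (iii) if $f$ is convex, there is $R\ge1$ independent of $t$ with $\nabla f(x_t)^\top d_t\ge(f(x_t)-f(x^\star))/R$. *)

theory Defs
  imports "HOL-Analysis.Analysis"
begin

definition ell :: "('a::real_inner \<Rightarrow> real) \<Rightarrow> ('a \<Rightarrow> 'a) \<Rightarrow> 'a \<Rightarrow> 'a \<Rightarrow> real" where
  "ell f g x y = (if x = y then 0
     else 2 * \<bar>f y - f x - g x \<bullet> (y - x)\<bar> / (norm (y - x))\<^sup>2)"

definition pfw_update :: "('a \<Rightarrow> real) \<Rightarrow> 'a \<Rightarrow> 'a \<Rightarrow> real \<Rightarrow> ('a \<Rightarrow> real)" where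
  "pfw_update \<alpha> s v \<gamma> = (\<lambda>u. \<alpha> u - (if u = s then \<gamma> else 0) + (if u = v then \<gamma> else 0))"

end

theory Submission
  imports Defs "HOL-Analysis.Analysis"
begin

lemma descent_aux:
  fixes f :: "'a::real_inner \<Rightarrow> real" and g :: "'a \<Rightarrow> 'a"
  assumes grad: "\<And>y. (f has_derivative (\<lambda>h. g y \<bullet> h)) (at y)"
    and lip: "\<And>y z. norm (g y - g z) \<le> L * norm (y - z)"
  shows "f (x + h) - f x - g x \<bullet> h \<le> L / 2 * (norm h)\<^sup>2"
proof -
  define p where "p = (\<lambda>l::real. f (x + l *\<^sub>R h) - l * (g x \<bullet> h) - L / 2 * (norm h)\<^sup>2 * l\<^sup>2)"
  have D: "(p has_real_derivative (g (x + l *\<^sub>R h) \<bullet> h - g x \<bullet> h - L * (norm h)\<^sup>2 * l)) (at l)" for l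
  proof -
    have "((\<lambda>l. x + l *\<^sub>R h) has_derivative (\<lambda>d. d *\<^sub>R h)) (at l)"
      by (auto intro!: derivative_eq_intros)
    from has_derivative_compose[OF this grad]
    have "((\<lambda>l. f (x + l *\<^sub>R h)) has_derivative (\<lambda>d. g (x + l *\<^sub>R h) \<bullet> (d *\<^sub>R h))) (at l)" .
    moreover have "(\<lambda>d. g (x + l *\<^sub>R h) \<bullet> (d *\<^sub>R h)) = (*) (g (x + l *\<^sub>R h) \<bullet> h)"
      by (auto simp: fun_eq_iff)
    ultimately have "((\<lambda>l. f (x + l *\<^sub>R h)) has_real_derivative (g (x + l *\<^sub>R h) \<bullet> h)) (at l)"
      unfolding has_field_derivative_def by simp
    then show ?thesis unfolding p_def
      by (auto intro!: derivative_eq_intros)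
  qed
  have "p 1 \<le> p 0"
  proof (rule DERIV_nonpos_imp_nonincreasing[of 0 1 p])
    fix l :: real assume l: "0 \<le> l" "l \<le> 1"
    have "(g (x + l *\<^sub>R h) - g x) \<bullet> h \<le> norm (g (x + l *\<^sub>R h) - g x) * norm h"
      by (rule norm_cauchy_schwarz)
    also have "\<dots> \<le> L * norm (l *\<^sub>R h) * norm h"
      using lip[of "x + l *\<^sub>R h" x] by (simp add: mult_right_mono)
    also have "\<dots> = L * (norm h)\<^sup>2 * l" using l by (simp add: power2_eq_square)
    finally have "g (x + l *\<^sub>R h) \<bullet> h - g x \<bullet> h - L * (norm h)\<^sup>2 * l \<le> 0"
      by (simp add: inner_diff_left)
    then show "\<exists>y. DERIV p l :> y \<and> y \<le> 0" using D by blast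
  qed simp
  then show ?thesis unfolding p_def by simp
qed

lemma descent:
  fixes f :: "'a::real_inner \<Rightarrow> real" and g :: "'a \<Rightarrow> 'a"
  assumes grad: "\<And>y. (f has_derivative (\<lambda>h. g y \<bullet> h)) (at y)"
    and lip: "\<And>y z. norm (g y - g z) \<le> L * norm (y - z)"
  shows "\<bar>f y - f x - g x \<bullet> (y - x)\<bar> \<le> L / 2 * (norm (y - x))\<^sup>2"
proof -
  have 1: "f y - f x - g x \<bullet> (y - x) \<le> L / 2 * (norm (y - x))\<^sup>2"
    using descent_aux[OF grad lip, of x "y - x"] by simp
  have grad': "\<And>y. ((\<lambda>z. - f z) has_derivative (\<lambda>h. (- g y) \<bullet> h)) (at y)"
    using grad by (auto intro!: derivative_eq_intros)
  have lip': "\<And>y z. norm ((- g y) - (- g z)) \<le> L * norm (y - z)"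
    using lip by (metis minus_diff_eq minus_diff_minus norm_minus_commute)
  have 2: "- f y + f x + g x \<bullet> (y - x) \<le> L / 2 * (norm (y - x))\<^sup>2"
    using descent_aux[OF grad' lip', of x "y - x"] by simp
  show ?thesis using 1 2 by linarith
qed

lemma ell_le:
  fixes f :: "'a::real_inner \<Rightarrow> real" and g :: "'a \<Rightarrow> 'a"
  assumes grad: "\<And>y. (f has_derivative (\<lambda>h. g y \<bullet> h)) (at y)"
    and lip: "\<And>y z. norm (g y - g z) \<le> L * norm (y - z)"
    and L: "0 \<le> L"
  shows "ell f g x y \<le> L"
proof (cases "x = y")
  case True then show ?thesis using L by (simp add: ell_def)
next
  case False
  then have n: "(norm (y - x))\<^sup>2 > 0" by simp
  have "2 * \<bar>f y - f x - g x \<bullet> (y - x)\<bar> \<le> L * (norm (y - x))\<^sup>2"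
    using descent[OF grad lip, of y x] by simp
  then show ?thesis using False n by (simp add: ell_def divide_le_eq)
qed

lemma convex_grad:
  fixes f :: "'a::real_inner \<Rightarrow> real" and g :: "'a \<Rightarrow> 'a"
  assumes grad: "\<And>y. (f has_derivative (\<lambda>h. g y \<bullet> h)) (at y)"
    and cvx: "convex_on UNIV f"
  shows "f y \<ge> f x + g x \<bullet> (y - x)"
proof -
  define h where "h = y - x"
  define p where "p = (\<lambda>l::real. f (x + l *\<^sub>R h))"
  have D: "(p has_real_derivative (g (x + l *\<^sub>R h) \<bullet> h)) (at l)" for l
  proof -
    have "((\<lambda>l. x + l *\<^sub>R h) has_derivative (\<lambda>d. d *\<^sub>R h)) (at l)"
      by (auto intro!: derivative_eq_intros)
    from has_derivative_compose[OF this grad]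
    have "((\<lambda>l. f (x + l *\<^sub>R h)) has_derivative (\<lambda>d. g (x + l *\<^sub>R h) \<bullet> (d *\<^sub>R h))) (at l)" .
    moreover have "(\<lambda>d. g (x + l *\<^sub>R h) \<bullet> (d *\<^sub>R h)) = (*) (g (x + l *\<^sub>R h) \<bullet> h)"
      by (auto simp: fun_eq_iff)
    ultimately show ?thesis
      unfolding has_field_derivative_def p_def by simp
  qed
  have cp: "convex_on UNIV p"
  proof (rule convex_onI)
    fix t a b :: real assume t: "0 < t" "t < 1"
    have "x + ((1 - t) * a + t * b) *\<^sub>R h = (1 - t) *\<^sub>R (x + a *\<^sub>R h) + t *\<^sub>R (x + b *\<^sub>R h)"
      by (simp add: algebra_simps)
    then show "p ((1 - t) *\<^sub>R a + t *\<^sub>R b) \<le> (1 - t) * p a + t * p b"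
      unfolding p_def using convex_onD[OF cvx, of t "x + a *\<^sub>R h" "x + b *\<^sub>R h"] t
      by simp
  qed simp
  have "p 1 - p 0 \<ge> (g (x + 0 *\<^sub>R h) \<bullet> h) * (1 - 0)"
    by (rule convex_on_imp_above_tangent[OF cp]) (use D[of 0] in auto)
  then show ?thesis unfolding p_def h_def by simp
qed


lemma interleave:
  fixes P :: "nat set" and M :: nat
  assumes P0: "0 \<in> P"
    and run: "\<And>a c. (\<And>j. a \<le> j \<Longrightarrow> j < a + c \<Longrightarrow> j \<notin> P) \<Longrightarrow> c \<le> M"
  shows "card ({..t} - P) \<le> M * card ({..t} \<inter> P)"
proof -
  have "\<exists>p\<le>t. p \<in> P \<and> (\<forall>j. p < j \<and> j \<le> t \<longrightarrow> j \<notin> P) \<and>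
          card ({..t} - P) + M \<le> M * card ({..t} \<inter> P) + (t - p)"
  proof (induction t)
    case 0
    have "{..0::nat} - P = {}" "{..0::nat} \<inter> P = {0}" using P0 by auto
    then show ?case using P0 by (intro exI[of _ 0]) auto
  next
    case (Suc t)
    then obtain p where p: "p \<le> t" "p \<in> P" "\<forall>j. p < j \<and> j \<le> t \<longrightarrow> j \<notin> P"
      and c: "card ({..t} - P) + M \<le> M * card ({..t} \<inter> P) + (t - p)" by blast
    have fin: "finite ({..t} - P)" "finite ({..t} \<inter> P)" by auto
    have tp: "t - p \<le> M"
      by (rule run[of "Suc p" "t - p"]) (use p in auto)
    show ?case
    proof (cases "Suc t \<in> P")
      case True
      have e1: "{..Suc t} - P = {..t} - P" using True by (auto simp: atMost_Suc)
      have e2: "{..Suc t} \<inter> P = insert (Suc t) ({..t} \<inter> P)" using True by (auto simp: atMost_Suc)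
      have "card ({..Suc t} \<inter> P) = Suc (card ({..t} \<inter> P))"
        unfolding e2 using fin by (subst card_insert_disjoint) auto
      then have "card ({..Suc t} - P) + M \<le> M * card ({..Suc t} \<inter> P) + (Suc t - Suc t)"
        using c tp e1 by simp
      moreover have "\<forall>j. Suc t < j \<and> j \<le> Suc t \<longrightarrow> j \<notin> P" by auto
      ultimately show ?thesis using True by blast
    next
      case False
      have e1: "{..Suc t} - P = insert (Suc t) ({..t} - P)" using False by (auto simp: atMost_Suc)
      have e2: "{..Suc t} \<inter> P = {..t} \<inter> P" using False by (auto simp: atMost_Suc)
      have "card ({..Suc t} - P) = Suc (card ({..t} - P))"
        unfolding e1 using fin by (subst card_insert_disjoint) auto
      then have "card ({..Suc t} - P) + M \<le> M * card ({..Suc t} \<inter> P) + (Suc t - p)"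
        using c p(1) e2 by simp
      moreover have "\<forall>j. p < j \<and> j \<le> Suc t \<longrightarrow> j \<notin> P"
        using p(3) False le_Suc_eq by blast
      ultimately show ?thesis using p(1,2) le_SucI by blast
    qed
  qed
  then obtain p where p: "p \<le> t" "\<forall>j. p < j \<and> j \<le> t \<longrightarrow> j \<notin> P"
    and c: "card ({..t} - P) + M \<le> M * card ({..t} \<inter> P) + (t - p)" by blast
  have "t - p \<le> M" by (rule run[of "Suc p" "t - p"]) (use p in auto)
  then show ?thesis using c by linarith
qed


lemma prod_fact:
  "k \<le> n \<Longrightarrow> (\<Prod>i\<in>{0..<k}. n - i) * fact (n - k) = (fact n :: nat)"
proof (induction k)
  case 0 then show ?case by simp
next
  case (Suc k)
  then have "n - k = Suc (n - Suc k)" by simp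
  then have "fact (n - k) = (n - k) * (fact (n - Suc k) :: nat)"
    by (simp add: fact_Suc)
  then show ?case using Suc by (simp add: algebra_simps)
qed

lemma sum_inv_fact_le3: "(\<Sum>j<m. 1 / fact j :: real) \<le> 3"
proof -
  have e: "(\<lambda>j. 1 ^ j /\<^sub>R fact j) = (\<lambda>j. 1 / fact j :: real)"
    by (auto simp: fun_eq_iff divide_inverse)
  have s: "summable (\<lambda>j. 1 / fact j :: real)"
    using summable_exp_generic[of "1::real"] by (simp only: e)
  have "(\<Sum>j<m. 1 / fact j :: real) \<le> (\<Sum>j. 1 / fact j)"
    by (rule sum_le_suminf[OF s]) auto
  also have "\<dots> = exp 1" by (simp only: exp_def e)
  also have "\<dots> \<le> 3" by (rule exp_le)
  finally show ?thesis .
qed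

lemma sum_prod_le:
  "(\<Sum>k\<le>n. (\<Prod>i\<in>{0..<k}. n - i)) \<le> 3 * (fact n :: nat)"
proof -
  have "real (\<Sum>k\<le>n. (\<Prod>i\<in>{0..<k}. n - i)) = (\<Sum>k\<le>n. fact n / fact (n - k))"
  proof -
    have "real (\<Prod>i\<in>{0..<k}. n - i) = fact n / fact (n - k)" if "k \<le> n" for k
    proof -
      have "real ((\<Prod>i\<in>{0..<k}. n - i) * fact (n - k)) = real (fact n)"
        using prod_fact[OF that] by simp
      then show ?thesis by (simp add: field_simps)
    qed
    then show ?thesis by (simp add: of_nat_sum)
  qed
  also have "\<dots> = fact n * (\<Sum>k<Suc n. 1 / fact (n - k))"
    by (simp add: sum_distrib_left lessThan_Suc_atMost)
  also have "(\<Sum>k<Suc n. 1 / fact (n - k) :: real) = (\<Sum>k<Suc n. 1 / fact k)"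
    using sum.nat_diff_reindex[of "\<lambda>k. 1 / fact k :: real" "Suc n"] by simp
  also have "fact n * \<dots> \<le> fact n * 3"
    by (rule mult_left_mono[OF sum_inv_fact_le3]) simp
  finally have "real (\<Sum>k\<le>n. (\<Prod>i\<in>{0..<k}. n - i)) \<le> real (3 * fact n)" by simp
  then show ?thesis by linarith
qed


lemma relabel_card:
  fixes A S :: "'a set" and \<beta> :: "'a \<Rightarrow> real"
  assumes finA: "finite A" and SA: "S \<subseteq> A" and zero: "\<And>u. u \<notin> S \<Longrightarrow> \<beta> u = 0"
  shows "card {\<beta> \<circ> \<sigma> | \<sigma>. \<sigma> permutes A} \<le> (\<Prod>i\<in>{0..<card S}. card A - i)"
proof -
  let ?X = "{\<beta> \<circ> \<sigma> | \<sigma>. \<sigma> permutes A}"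
  let ?Y = "{h \<in> S \<rightarrow>\<^sub>E A. inj_on h S}"
  define sg where "sg = (\<lambda>\<alpha>. SOME \<sigma>. \<sigma> permutes A \<and> \<alpha> = \<beta> \<circ> \<sigma>)"
  define \<Phi> where "\<Phi> = (\<lambda>\<alpha>. restrict (inv (sg \<alpha>)) S)"
  have sgP: "sg \<alpha> permutes A \<and> \<alpha> = \<beta> \<circ> sg \<alpha>" if "\<alpha> \<in> ?X" for \<alpha>
  proof -
    from that have "\<exists>\<sigma>. \<sigma> permutes A \<and> \<alpha> = \<beta> \<circ> \<sigma>" by blast
    from someI_ex[OF this] show ?thesis unfolding sg_def .
  qed
  have injP: "inj_on \<Phi> ?X"
  proof (rule inj_onI)
    fix a1 a2 assume a1: "a1 \<in> ?X" and a2: "a2 \<in> ?X" and eq: "\<Phi> a1 = \<Phi> a2"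
    define s1 where "s1 = sg a1"
    define s2 where "s2 = sg a2"
    have p1: "s1 permutes A" "a1 = \<beta> \<circ> s1" using sgP[OF a1] s1_def by auto
    have p2: "s2 permutes A" "a2 = \<beta> \<circ> s2" using sgP[OF a2] s2_def by auto
    have ieq: "inv s1 y = inv s2 y" if "y \<in> S" for y
      using fun_cong[OF eq, of y] that unfolding \<Phi>_def s1_def s2_def by simp
    show "a1 = a2"
    proof
      fix u
      show "a1 u = a2 u"
      proof (cases "s1 u \<in> S")
        case True
        have "inv s2 (s1 u) = u" using ieq[OF True] permutes_inverses(2)[OF p1(1)] by simp
        then have "s2 u = s1 u" using permutes_inverses(1)[OF p2(1)] by metis
        then show ?thesis using p1 p2 by simp
      next
        case F1: False
        show ?thesis
        proof (cases "s2 u \<in> S")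
          case True
          have "inv s1 (s2 u) = u" using ieq[OF True] permutes_inverses(2)[OF p2(1)] by simp
          then have "s1 u = s2 u" using permutes_inverses(1)[OF p1(1)] by metis
          then show ?thesis using p1 p2 by simp
        next
          case False
          then show ?thesis using F1 p1 p2 zero by simp
        qed
      qed
    qed
  qed
  have imP: "\<Phi> ` ?X \<subseteq> ?Y"
  proof
    fix h assume "h \<in> \<Phi> ` ?X"
    then obtain \<alpha> where \<alpha>: "\<alpha> \<in> ?X" and h: "h = \<Phi> \<alpha>" by blast
    have p: "inv (sg \<alpha>) permutes A" using sgP[OF \<alpha>] permutes_inv by blast
    have "inj_on (inv (sg \<alpha>)) S" using permutes_inj[OF p] by (auto intro: inj_on_subset)
    moreover have "inv (sg \<alpha>) y \<in> A" if "y \<in> S" for y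
      using p that SA by (simp add: permutes_in_image subsetD)
    ultimately show "h \<in> ?Y" unfolding h \<Phi>_def by (simp add: inj_on_def)
  qed
  have finS: "finite S" using finite_subset[OF SA finA] .
  have "finite (S \<rightarrow>\<^sub>E A)" using finS finA by (rule finite_PiE)
  moreover have "?Y \<subseteq> S \<rightarrow>\<^sub>E A" by blast
  ultimately have "finite ?Y" by (rule finite_subset[rotated])
  with injP imP have "card ?X \<le> card ?Y" by (intro card_inj_on_le)
  also have "card ?Y = (\<Prod>i\<in>{0..<card S}. card A - i)"
    using card_inj_on_subset_funcset[of S A S] finA finS by simp
  finally show ?thesis .
qed




lemma pfw_sum:
  fixes a :: "'a::real_vector \<Rightarrow> real"
  assumes "finite A" "s \<in> A" "v \<in> A"
  shows "sum (pfw_update a s v c) A = sum a A"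
    and "(\<Sum>u\<in>A. pfw_update a s v c u *\<^sub>R u) = (\<Sum>u\<in>A. a u *\<^sub>R u) - c *\<^sub>R (s - v)"
proof -
  have "sum (pfw_update a s v c) A = sum a A - (\<Sum>u\<in>A. if u = s then c else 0) + (\<Sum>u\<in>A. if u = v then c else 0)"
    unfolding pfw_update_def by (simp add: sum.distrib sum_subtractf)
  then show "sum (pfw_update a s v c) A = sum a A" using assms by (simp add: sum.delta')
  have "(\<Sum>u\<in>A. pfw_update a s v c u *\<^sub>R u) = (\<Sum>u\<in>A. a u *\<^sub>R u) - (\<Sum>u\<in>A. (if u = s then c else 0) *\<^sub>R u) + (\<Sum>u\<in>A. (if u = v then c else 0) *\<^sub>R u)"
    unfolding pfw_update_def by (simp add: scaleR_add_left scaleR_diff_left sum.distrib sum_subtractf)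
  also have "\<dots> = (\<Sum>u\<in>A. a u *\<^sub>R u) - c *\<^sub>R s + c *\<^sub>R v"
    using assms by (simp add: if_distrib[of "\<lambda>z. z *\<^sub>R _"] sum.delta' cong: if_cong)
  finally show "(\<Sum>u\<in>A. pfw_update a s v c u *\<^sub>R u) = (\<Sum>u\<in>A. a u *\<^sub>R u) - c *\<^sub>R (s - v)"
    by (simp add: scaleR_diff_right)
qed

locale acfw =
  fixes A :: "'a::euclidean_space set"
    and f :: "'a \<Rightarrow> real" and g :: "'a \<Rightarrow> 'a" and L :: real
    and \<eta> :: real and r :: "nat \<Rightarrow> real" and rr :: real
    and xm1 :: 'a and x v s d xb :: "nat \<Rightarrow> 'a"
    and \<gamma> \<gamma>max Lk :: "nat \<Rightarrow> real" and \<alpha> :: "nat \<Rightarrow> 'a \<Rightarrow> real"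
    and xstar :: 'a
  assumes finA: "finite A" and neA: "A \<noteq> {}"
    and grad: "\<And>y. (f has_derivative (\<lambda>h. g y \<bullet> h)) (at y)"
    and lip: "\<And>y z. norm (g y - g z) \<le> L * norm (y - z)"
    and xstar: "xstar \<in> convex hull A" "\<And>y. y \<in> convex hull A \<Longrightarrow> f xstar \<le> f y"
    and eta: "1 < \<eta>" "\<eta> < 2"
    and r_pos: "\<And>t. 0 < r t" and r_le1: "\<And>t. r t \<le> 1"
    and r_prod: "(\<lambda>T. \<Prod>t<T. r t) \<longlonglongrightarrow> rr" and rr_pos: "0 < rr"
    and xm1: "xm1 \<in> A"
    and x0: "x 0 \<in> A" "\<And>u. u \<in> A \<Longrightarrow> g xm1 \<bullet> x 0 \<le> g xm1 \<bullet> u"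
    and L0: "Lk 0 = ell f g xm1 (x 0)" and L0_pos: "0 < Lk 0"
    and vt: "\<And>t. v t \<in> A" "\<And>t u. u \<in> A \<Longrightarrow> g (x t) \<bullet> v t \<le> g (x t) \<bullet> u"
    and alpha0: "\<alpha> 0 = (\<lambda>u. if u = x 0 then 1 else 0)"
    and st: "\<And>t. s t \<in> {u \<in> A. \<alpha> t u > 0}"
      "\<And>t u. u \<in> {u \<in> A. \<alpha> t u > 0} \<Longrightarrow> g (x t) \<bullet> u \<le> g (x t) \<bullet> s t"
    and dt: "\<And>t. d t = s t - v t"
    and gmax: "\<And>t. \<gamma>max t = \<alpha> t (s t)"
    and gam: "\<And>t. \<gamma> t = min (g (x t) \<bullet> d t / (Lk t * (norm (d t))\<^sup>2)) (\<gamma>max t)"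
    and xbar: "\<And>t. xb t = x t - \<gamma> t *\<^sub>R d t"
    and Lnext: "\<And>t. Lk (Suc t) = max (ell f g (x t) (xb t)) (r t * Lk t)"
    and xnext: "\<And>t. x (Suc t) = (if f (xb t) < f (x t) then xb t else x t)"
    and anext: "\<And>t. \<alpha> (Suc t) =
        (if f (xb t) < f (x t) then pfw_update (\<alpha> t) (s t) (v t) (\<gamma> t) else \<alpha> t)"
begin

lemma sA: "s t \<in> A" and s_pos: "\<alpha> t (s t) > 0" using st(1)[of t] by auto

lemma gd_nonneg: "0 \<le> g (x t) \<bullet> d t"
  using vt(2)[OF sA, of t] by (simp add: dt inner_diff_right)

lemma gmax_pos: "0 < \<gamma>max t" using s_pos by (simp add: gmax)

lemma gam_le: "\<gamma> t \<le> \<gamma>max t" by (simp add: gam)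

lemma Lk_pos: "0 < Lk t"
proof (induction t)
  case 0 then show ?case by (rule L0_pos)
next
  case (Suc t)
  have "0 < r t * Lk t" using r_pos Suc by simp
  then show ?case by (simp add: Lnext)
qed

lemma gam_nonneg: "0 \<le> \<gamma> t"
  using gd_nonneg[of t] Lk_pos[of t] gmax_pos[of t] by (simp add: gam)

definition "Inv t \<longleftrightarrow> (\<forall>u. 0 \<le> \<alpha> t u) \<and> (\<forall>u. u \<notin> A \<longrightarrow> \<alpha> t u = 0) \<and> sum (\<alpha> t) A = 1
   \<and> x t = (\<Sum>u\<in>A. \<alpha> t u *\<^sub>R u)"

lemma inv: "Inv t"
proof (induction t)
  case 0
  have "(\<Sum>u\<in>A. \<alpha> 0 u *\<^sub>R u) = x 0" using finA x0(1) by (simp add: alpha0 if_distrib[of "\<lambda>z. z *\<^sub>R _"] sum.delta' cong: if_cong)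
  moreover have "sum (\<alpha> 0) A = 1" using finA x0(1) by (simp add: alpha0 sum.delta')
  ultimately show ?case using x0(1) unfolding Inv_def by (auto simp: alpha0)
next
  case (Suc t)
  show ?case
  proof (cases "f (xb t) < f (x t)")
    case False
    then show ?thesis using Suc by (simp add: Inv_def anext xnext)
  next
    case True
    have a: "\<alpha> (Suc t) = pfw_update (\<alpha> t) (s t) (v t) (\<gamma> t)" "x (Suc t) = xb t"
      using True by (simp_all add: anext xnext)
    have nn: "0 \<le> \<alpha> (Suc t) u" for u
      using Suc gam_le[of t] gam_nonneg[of t] unfolding a Inv_def pfw_update_def gmax
      by (auto simp: add_nonneg_nonneg)
    moreover have "\<forall>u. u \<notin> A \<longrightarrow> \<alpha> (Suc t) u = 0"
      using Suc sA[of t] vt(1)[of t] unfolding a Inv_def pfw_update_def by auto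
    moreover have "sum (\<alpha> (Suc t)) A = 1"
      using Suc pfw_sum(1)[OF finA sA vt(1)] unfolding a Inv_def by simp
    moreover have "x (Suc t) = (\<Sum>u\<in>A. \<alpha> (Suc t) u *\<^sub>R u)"
      using Suc pfw_sum(2)[OF finA sA vt(1)] unfolding a Inv_def by (simp add: xbar dt)
    ultimately show ?thesis unfolding Inv_def by blast
  qed
qed

lemma a_nonneg: "0 \<le> \<alpha> t u" and a_out: "u \<notin> A \<Longrightarrow> \<alpha> t u = 0"
  and a_sum: "sum (\<alpha> t) A = 1" and x_eq: "x t = (\<Sum>u\<in>A. \<alpha> t u *\<^sub>R u)"
  using inv[of t] unfolding Inv_def by auto

lemma hull_step:
  assumes c: "0 \<le> c" "c \<le> \<gamma>max t"
  shows "x t - c *\<^sub>R d t \<in> convex hull A"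
proof -
  let ?w = "pfw_update (\<alpha> t) (s t) (v t) c"
  have "\<forall>u\<in>A. 0 \<le> ?w u"
    using a_nonneg[of t] c unfolding pfw_update_def gmax by (auto simp: add_nonneg_nonneg)
  moreover have "sum ?w A = 1" using pfw_sum(1)[OF finA sA vt(1)] a_sum by simp
  moreover have "(\<Sum>u\<in>A. ?w u *\<^sub>R u) = x t - c *\<^sub>R d t"
    using pfw_sum(2)[OF finA sA vt(1)] x_eq[of t] by (simp add: dt)
  ultimately show ?thesis unfolding convex_hull_finite[OF finA] by blast
qed

lemma part_i: "norm (d t) \<le> diameter A \<and> (\<forall>c\<in>{0..\<gamma>max t}. x t - c *\<^sub>R d t \<in> convex hull A)"
proof
  have "bounded A" using finA by (rule finite_imp_bounded)
  then have "dist (s t) (v t) \<le> diameter A"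
    using sA vt(1) by (rule diameter_bounded_bound)
  then show "norm (d t) \<le> diameter A" by (simp add: dt dist_norm)
  show "\<forall>c\<in>{0..\<gamma>max t}. x t - c *\<^sub>R d t \<in> convex hull A" using hull_step by auto
qed

lemma lin_hull_ge:
  assumes "y \<in> convex hull A"
  shows "g (x t) \<bullet> v t \<le> g (x t) \<bullet> y"
proof -
  obtain w where w: "\<forall>u\<in>A. 0 \<le> w u" "sum w A = 1" "(\<Sum>u\<in>A. w u *\<^sub>R u) = y"
    using assms unfolding convex_hull_finite[OF finA] by blast
  have "g (x t) \<bullet> y = (\<Sum>u\<in>A. w u * (g (x t) \<bullet> u))"
    using w(3) by (auto simp: inner_sum_right)
  also have "\<dots> \<ge> (\<Sum>u\<in>A. w u * (g (x t) \<bullet> v t))"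
    using w(1) vt(2) by (intro sum_mono mult_left_mono) auto
  also have "(\<Sum>u\<in>A. w u * (g (x t) \<bullet> v t)) = g (x t) \<bullet> v t"
    using w(2) by (simp add: sum_distrib_right[symmetric])
  finally show ?thesis .
qed

lemma x_le_s: "g (x t) \<bullet> x t \<le> g (x t) \<bullet> s t"
proof -
  have "g (x t) \<bullet> x t = (\<Sum>u\<in>A. \<alpha> t u * (g (x t) \<bullet> u))"
    by (subst x_eq) (auto simp: inner_sum_right)
  also have "\<dots> \<le> (\<Sum>u\<in>A. \<alpha> t u * (g (x t) \<bullet> s t))"
  proof (rule sum_mono)
    fix u assume u: "u \<in> A"
    show "\<alpha> t u * (g (x t) \<bullet> u) \<le> \<alpha> t u * (g (x t) \<bullet> s t)"
    proof (cases "\<alpha> t u > 0")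
      case True then show ?thesis using st(2)[of u t] u by (intro mult_left_mono) auto
    next
      case False then have "\<alpha> t u = 0" using a_nonneg[of t u] by simp
      then show ?thesis by simp
    qed
  qed
  also have "\<dots> = g (x t) \<bullet> s t" using a_sum[of t] by (simp add: sum_distrib_right[symmetric])
  finally show ?thesis .
qed

lemma part_iii:
  assumes "convex_on UNIV f"
  shows "g (x t) \<bullet> d t \<ge> (f (x t) - f xstar) / 1"
proof -
  have "f xstar \<ge> f (x t) + g (x t) \<bullet> (xstar - x t)" by (rule convex_grad[OF grad assms])
  moreover have "g (x t) \<bullet> v t \<le> g (x t) \<bullet> xstar" by (rule lin_hull_ge[OF xstar(1)])
  moreover note x_le_s[of t]
  ultimately show ?thesis by (simp add: dt inner_diff_right)
qed

lemma L_nonneg: "0 \<le> L"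
proof -
  obtain b :: 'a where b: "b \<in> Basis" using nonempty_Basis by blast
  then have "b \<noteq> 0" by auto
  then have "0 < norm (b - 0)" by simp
  moreover have "0 \<le> L * norm (b - 0)" using lip[of b 0] norm_ge_zero[of "g b - g 0"] by linarith
  ultimately show ?thesis by (simp add: zero_le_mult_iff)
qed

lemma Lk_le_L: "Lk t \<le> L"
proof (induction t)
  case 0 then show ?case using ell_le[OF grad lip L_nonneg] by (simp add: L0)
next
  case (Suc t)
  have "r t * Lk t \<le> Lk t" using r_le1[of t] Lk_pos[of t] by (simp add: mult_le_cancel_right1)
  then show ?case using ell_le[OF grad lip L_nonneg] Suc by (simp add: Lnext)
qed

lemma Lk_ge: "r t * Lk t \<le> Lk (Suc t)" by (simp add: Lnext)

lemma reject_big: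
  assumes rej: "\<not> f (xb t) < f (x t)" and ge: "\<gamma>max t \<le> \<gamma> t"
  shows "\<eta> * Lk t < Lk (Suc t)"
proof -
  define a where "a = \<gamma> t"
  define G where "G = g (x t) \<bullet> d t"
  define K where "K = Lk t"
  define D where "D = (norm (d t))\<^sup>2"
  have a_pos: "0 < a" using ge gmax_pos[of t] unfolding a_def by linarith
  have K: "0 < K" using Lk_pos unfolding K_def by simp
  have aq: "a \<le> G / (K * D)" using gam[of t] unfolding a_def G_def K_def D_def by simp
  have D: "0 < D"
  proof (rule ccontr)
    assume "\<not> 0 < D"
    then have "D = 0" unfolding D_def by simp
    then show False using aq a_pos by simp
  qed
  have aKD: "a * K * D \<le> G" using aq K D by (simp add: field_simps)
  have dne: "d t \<noteq> 0" using D unfolding D_def by auto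
  have xne: "x t \<noteq> xb t" using a_pos dne unfolding xbar a_def by auto
  have nrm: "(norm (xb t - x t))\<^sup>2 = a\<^sup>2 * D"
    unfolding xbar D_def a_def by (simp add: power_mult_distrib)
  have inn: "g (x t) \<bullet> (xb t - x t) = - a * G" unfolding xbar a_def G_def by simp
  define E where "E = f (xb t) - f (x t)"
  have E: "0 \<le> E" using rej unfolding E_def by simp
  have ell: "ell f g (x t) (xb t) = 2 * \<bar>E + a * G\<bar> / (a\<^sup>2 * D)"
    using xne unfolding ell_def E_def by (simp add: nrm inn)
  have "2 * K * (a\<^sup>2 * D) \<le> 2 * \<bar>E + a * G\<bar>"
  proof -
    have "2 * K * (a\<^sup>2 * D) = 2 * a * (a * K * D)" by (simp add: power2_eq_square)
    also have "\<dots> \<le> 2 * a * G" using aKD a_pos by simp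
    also have "\<dots> \<le> 2 * \<bar>E + a * G\<bar>"
    proof -
      have "a * G \<le> \<bar>E + a * G\<bar>" using E abs_ge_self[of "E + a * G"] by linarith
      then show ?thesis by simp
    qed
    finally show ?thesis .
  qed
  then have "2 * K \<le> ell f g (x t) (xb t)" unfolding ell using a_pos D
    by (simp add: le_divide_eq)
  moreover have "\<eta> * K < 2 * K" using eta K by simp
  ultimately show ?thesis unfolding K_def by (simp add: Lnext)
qed


definition "N t = card {u \<in> A. \<alpha> t u > 0}"
definition "Q t \<longleftrightarrow> \<gamma>max t < 1 \<and> \<not> \<gamma> t < \<gamma>max t \<and> Lk (Suc t) \<le> \<eta> * Lk t"

lemma N_le: "N t \<le> card A"
  unfolding N_def using finA by (intro card_mono) auto

lemma f_mono: "f (x (Suc t)) \<le> f (x t)"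
  by (simp add: xnext)

lemma Q_props:
  assumes "Q t"
  shows "f (xb t) < f (x t)" "\<gamma> t = \<alpha> t (s t)" "s t \<noteq> v t"
    "\<alpha> (Suc t) = pfw_update (\<alpha> t) (s t) (v t) (\<alpha> t (s t))"
    "f (x (Suc t)) < f (x t)"
proof -
  have ge: "\<gamma>max t \<le> \<gamma> t" using assms unfolding Q_def by simp
  show acc: "f (xb t) < f (x t)"
  proof (rule ccontr)
    assume "\<not> f (xb t) < f (x t)"
    from reject_big[OF this ge] assms show False unfolding Q_def by simp
  qed
  show g: "\<gamma> t = \<alpha> t (s t)" using ge gam_le[of t] by (simp add: gmax)
  show "s t \<noteq> v t"
  proof
    assume "s t = v t"
    then have "d t = 0" by (simp add: dt)
    then have "\<gamma> t = 0" using gmax_pos[of t] by (simp add: gam)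
    then show False using g s_pos[of t] by simp
  qed
  show "\<alpha> (Suc t) = pfw_update (\<alpha> t) (s t) (v t) (\<alpha> t (s t))"
    using acc g by (simp add: anext)
  show "f (x (Suc t)) < f (x t)" using acc by (simp add: xnext)
qed

lemma Q_supp:
  assumes "Q t"
  shows "N (Suc t) \<le> N t"
    and "N (Suc t) = N t \<Longrightarrow> \<alpha> (Suc t) = \<alpha> t \<circ> Transposition.transpose (s t) (v t)"
proof -
  note P = Q_props[OF assms]
  define S where "S = {u \<in> A. \<alpha> t u > 0}"
  define S' where "S' = {u \<in> A. \<alpha> (Suc t) u > 0}"
  have finS: "finite S" using finA unfolding S_def by simp
  have sS: "s t \<in> S" using st(1) unfolding S_def by simp
  have a'u: "\<alpha> (Suc t) u = \<alpha> t u" if "u \<noteq> s t" "u \<noteq> v t" for u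
    using that unfolding P(4) pfw_update_def by simp
  have a's: "\<alpha> (Suc t) (s t) = 0" using P(3) unfolding P(4) pfw_update_def by simp
  have a'v: "\<alpha> (Suc t) (v t) = \<alpha> t (v t) + \<alpha> t (s t)" using P(3) unfolding P(4) pfw_update_def by simp
  have "N (Suc t) \<le> N t \<and> (N (Suc t) = N t \<longrightarrow> \<alpha> (Suc t) = \<alpha> t \<circ> Transposition.transpose (s t) (v t))"
  proof (cases "\<alpha> t (v t) > 0")
    case True
    have "u \<in> S' \<longleftrightarrow> u \<in> S - {s t}" for u
      unfolding S_def S'_def using a'u[of u] a's a'v True s_pos[of t] vt(1)[of t] P(3)
      by (cases "u = s t"; cases "u = v t") auto
    then have "S' = S - {s t}" by blast
    then have "card S' < card S" by (metis card_Diff1_less finS sS)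
    then show ?thesis unfolding N_def S_def S'_def by simp
  next
    case False
    then have v0: "\<alpha> t (v t) = 0" using a_nonneg[of t "v t"] by simp
    have "u \<in> S' \<longleftrightarrow> u \<in> insert (v t) (S - {s t})" for u
      unfolding S_def S'_def using a'u[of u] a's a'v v0 s_pos[of t] vt(1)[of t] P(3)
      by (cases "u = s t"; cases "u = v t") auto
    then have "S' = insert (v t) (S - {s t})" by blast
    moreover have "v t \<notin> S - {s t}" using v0 unfolding S_def by simp
    ultimately have "card S' = Suc (card (S - {s t}))" using finS by simp
    then have "card S' = card S" using card_Suc_Diff1[OF finS sS] by simp
    moreover have "\<alpha> (Suc t) = \<alpha> t \<circ> Transposition.transpose (s t) (v t)"
    proof
      fix u show "\<alpha> (Suc t) u = (\<alpha> t \<circ> Transposition.transpose (s t) (v t)) u"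
        using a'u a's a'v v0 by (cases "u = s t"; cases "u = v t") auto
    qed
    ultimately show ?thesis unfolding N_def S_def S'_def by simp
  qed
  then show "N (Suc t) \<le> N t" "N (Suc t) = N t \<Longrightarrow> \<alpha> (Suc t) = \<alpha> t \<circ> Transposition.transpose (s t) (v t)"
    by auto
qed

lemma segment:
  assumes "\<And>i. j0 \<le> i \<Longrightarrow> i < j1 \<Longrightarrow> Q i \<and> N (Suc i) = N i"
  shows "j0 \<le> j \<Longrightarrow> j \<le> j1 \<Longrightarrow> \<exists>\<sigma>. \<sigma> permutes A \<and> \<alpha> j = \<alpha> j0 \<circ> \<sigma>"
proof (induction j rule: nat.induct)
  case zero
  then show ?case using permutes_id[of A] by (metis comp_id le_zero_eq)
next
  case (Suc j)
  show ?case
  proof (cases "j0 = Suc j")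
    case True then show ?thesis using permutes_id[of A] by (metis comp_id)
  next
    case False
    then have j: "j0 \<le> j" "j < j1" using Suc.prems by auto
    then have "j \<le> j1" by simp
    then obtain \<sigma> where \<sigma>: "\<sigma> permutes A" "\<alpha> j = \<alpha> j0 \<circ> \<sigma>" using Suc.IH j(1) by blast
    have q: "Q j" "N (Suc j) = N j" using assms j by auto
    have "\<alpha> (Suc j) = \<alpha> j0 \<circ> (\<sigma> \<circ> Transposition.transpose (s j) (v j))"
      using Q_supp(2)[OF q] \<sigma>(2) by (simp add: o_assoc)
    moreover have "\<sigma> \<circ> Transposition.transpose (s j) (v j) permutes A"
      by (rule permutes_compose[OF permutes_swap_id[OF sA vt(1)] \<sigma>(1)])
    ultimately show ?thesis by blast
  qed
qed

definition "W k = (\<Prod>i\<in>{0..<k}. card A - i)"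

lemma segment_card:
  assumes "\<And>i. j0 \<le> i \<Longrightarrow> i < j1 \<Longrightarrow> Q i \<and> N (Suc i) = N i"
  shows "card (\<alpha> ` {j0..j1}) \<le> W (N j0)"
proof -
  let ?S = "{u \<in> A. \<alpha> j0 u > 0}"
  have "\<exists>\<sigma>. \<sigma> permutes A \<and> \<alpha> j = \<alpha> j0 \<circ> \<sigma>" if "j0 \<le> j" "j \<le> j1" for j
    using segment[of j0 j1 j] assms that by blast
  then have "\<alpha> ` {j0..j1} \<subseteq> {\<alpha> j0 \<circ> \<sigma> | \<sigma>. \<sigma> permutes A}"
  proof (intro image_subsetI)
    fix j assume "j \<in> {j0..j1}"
    then obtain \<sigma> where "\<sigma> permutes A" "\<alpha> j = \<alpha> j0 \<circ> \<sigma>"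
      using \<open>\<And>j. j0 \<le> j \<Longrightarrow> j \<le> j1 \<Longrightarrow> \<exists>\<sigma>. \<sigma> permutes A \<and> \<alpha> j = \<alpha> j0 \<circ> \<sigma>\<close> by auto
    then show "\<alpha> j \<in> {\<alpha> j0 \<circ> \<sigma> | \<sigma>. \<sigma> permutes A}" by blast
  qed
  moreover have "finite {\<alpha> j0 \<circ> \<sigma> | \<sigma>. \<sigma> permutes A}"
  proof -
    have "{\<alpha> j0 \<circ> \<sigma> | \<sigma>. \<sigma> permutes A} = (\<lambda>\<sigma>. \<alpha> j0 \<circ> \<sigma>) ` {\<sigma>. \<sigma> permutes A}" by blast
    then show ?thesis using finite_permutations[OF finA] by simp
  qed
  ultimately have "card (\<alpha> ` {j0..j1}) \<le> card {\<alpha> j0 \<circ> \<sigma> | \<sigma>. \<sigma> permutes A}"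
    by (rule card_mono[rotated])
  also have "\<dots> \<le> W (N j0)"
    unfolding W_def N_def
  proof (rule relabel_card[OF finA])
    show "?S \<subseteq> A" by blast
    fix u assume "u \<notin> ?S"
    then show "\<alpha> j0 u = 0" using a_nonneg[of j0 u] a_out[of u j0] by force
  qed
  finally show ?thesis .
qed

lemma run_N_mono:
  assumes "\<And>i. t0 \<le> i \<Longrightarrow> i < t1 \<Longrightarrow> Q i"
  shows "t0 \<le> j \<Longrightarrow> j \<le> t1 \<Longrightarrow> N j \<le> N t0"
proof (induction j)
  case 0 then show ?case by simp
next
  case (Suc j)
  show ?case
  proof (cases "t0 = Suc j")
    case True then show ?thesis by simp
  next
    case False
    then have "t0 \<le> j" "j < t1" using Suc.prems by auto
    then have "N j \<le> N t0" "N (Suc j) \<le> N j"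
      using Suc.IH Q_supp(1)[OF assms, of j] by auto
    then show ?thesis by linarith
  qed
qed

lemma run_card:
  "\<forall>t0 t1. N t0 = k \<longrightarrow> t0 \<le> t1 \<longrightarrow> (\<forall>i. t0 \<le> i \<and> i < t1 \<longrightarrow> Q i) \<longrightarrow>
     card (\<alpha> ` {t0..t1}) \<le> (\<Sum>m\<le>k. W m)"
proof (induction k rule: less_induct)
  case (less k)
  show ?case
  proof (intro allI impI)
    fix t0 t1 assume k: "N t0 = k" and t01: "t0 \<le> t1" and q: "\<forall>i. t0 \<le> i \<and> i < t1 \<longrightarrow> Q i"
    have mono: "N j \<le> N t0" if "t0 \<le> j" "j \<le> t1" for j
      using run_N_mono[of t0 t1 j] q that by blast
    show "card (\<alpha> ` {t0..t1}) \<le> (\<Sum>m\<le>k. W m)"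
    proof (cases "\<exists>j. t0 \<le> j \<and> j \<le> t1 \<and> N j < N t0")
      case False
      have eq: "N j = N t0" if "t0 \<le> j" "j \<le> t1" for j
      proof -
        have "\<not> N j < N t0" using False that by blast
        then show ?thesis using mono[OF that] by linarith
      qed
      have "card (\<alpha> ` {t0..t1}) \<le> W (N t0)"
      proof (rule segment_card)
        fix i assume i: "t0 \<le> i" "i < t1"
        have "Q i" using q i by blast
        moreover have "N (Suc i) = N t0" using i by (intro eq) simp_all
        moreover have "N i = N t0" using i by (intro eq) simp_all
        ultimately show "Q i \<and> N (Suc i) = N i" by simp
      qed
      also have "\<dots> \<le> (\<Sum>m\<le>k. W m)" using k by (intro member_le_sum) auto
      finally show ?thesis .
    next
      case True
      define j1 where "j1 = (LEAST j. t0 \<le> j \<and> j \<le> t1 \<and> N j < N t0)"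
      have j1: "t0 \<le> j1" "j1 \<le> t1" "N j1 < N t0"
        using LeastI_ex[OF True] unfolding j1_def by auto
      have nl: "\<not> (t0 \<le> j \<and> j \<le> t1 \<and> N j < N t0)" if "j < j1" for j
        using not_less_Least[of j] that unfolding j1_def by blast
      have "j1 \<noteq> t0" using j1(3) by auto
      then have j1gt: "t0 < j1" using j1(1) by simp
      have eq: "N j = N t0" if "t0 \<le> j" "j < j1" for j
      proof -
        have jt: "j \<le> t1" using that j1(2) by simp
        have "\<not> N j < N t0" using nl[OF that(2)] that(1) jt by blast
        then show ?thesis using mono[OF that(1) jt] by linarith
      qed
      have c1: "card (\<alpha> ` {t0..j1 - 1}) \<le> W (N t0)"
      proof (rule segment_card)
        fix i assume "t0 \<le> i" "i < j1 - 1"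
        then have i: "t0 \<le> i" "i < j1 - 1" by simp_all
        have "Q i" using q i j1 by simp
        moreover have "N (Suc i) = N t0" using i by (intro eq) simp_all
        moreover have "N i = N t0" using i by (intro eq) simp_all
        ultimately show "Q i \<and> N (Suc i) = N i" by simp
      qed
      have IH: "\<forall>a b. N a = N j1 \<longrightarrow> a \<le> b \<longrightarrow> (\<forall>i. a \<le> i \<and> i < b \<longrightarrow> Q i) \<longrightarrow>
          card (\<alpha> ` {a..b}) \<le> (\<Sum>m\<le>N j1. W m)"
        using less.IH[of "N j1"] j1(3) k by simp
      have q2: "\<forall>i. j1 \<le> i \<and> i < t1 \<longrightarrow> Q i" using q j1(1) by simp
      have c2: "card (\<alpha> ` {j1..t1}) \<le> (\<Sum>m\<le>N j1. W m)"
        using IH j1(2) q2 by blast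
      have "{t0..t1} = {t0..j1 - 1} \<union> {j1..t1}" using j1 j1gt by auto
      then have "card (\<alpha> ` {t0..t1}) \<le> card (\<alpha> ` {t0..j1 - 1}) + card (\<alpha> ` {j1..t1})"
        by (simp add: image_Un card_Un_le)
      also have "\<dots> \<le> W (N t0) + (\<Sum>m\<le>N j1. W m)" using c1 c2 by simp
      also have "(\<Sum>m\<le>N j1. W m) \<le> (\<Sum>m<N t0. W m)"
        using j1 by (intro sum_mono2) auto
      also have "W (N t0) + (\<Sum>m<N t0. W m) = (\<Sum>m\<le>k. W m)"
        using k by (simp add: lessThan_Suc_atMost[symmetric])
      finally show ?thesis by simp
    qed
  qed
qed

lemma run_decr:
  assumes "\<And>i. a \<le> i \<Longrightarrow> i < b \<Longrightarrow> Q i"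
  shows "a \<le> i \<Longrightarrow> i < j \<Longrightarrow> j \<le> b \<Longrightarrow> f (x j) < f (x i)"
proof (induction j)
  case 0 then show ?case by simp
next
  case (Suc j)
  have q: "f (x (Suc j)) < f (x j)" using Q_props(5)[OF assms] Suc.prems by simp
  show ?case
  proof (cases "i = j")
    case True then show ?thesis using q by simp
  next
    case False then show ?thesis using Suc q by simp
  qed
qed

lemma run_len:
  assumes "\<And>i. t0 \<le> i \<Longrightarrow> i < t0 + c \<Longrightarrow> Q i"
  shows "c \<le> 3 * fact (card A)"
proof -
  have dec: "f (x j) < f (x i)" if "t0 \<le> i" "i < j" "j \<le> t0 + c" for i j
    by (rule run_decr[where a=t0 and b="t0+c"]) (use assms that in auto)
  have inj: "inj_on \<alpha> {t0..t0 + c}"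
  proof (rule inj_onI)
    fix i j assume ij: "i \<in> {t0..t0 + c}" "j \<in> {t0..t0 + c}" "\<alpha> i = \<alpha> j"
    then have xe: "x i = x j" using x_eq[of i] x_eq[of j] by simp
    show "i = j"
    proof (rule ccontr)
      assume "i \<noteq> j"
      then consider "i < j" | "j < i" by linarith
      then show False
      proof cases
        case 1 then show False using dec[of i j] ij xe by simp
      next
        case 2 then show False using dec[of j i] ij xe by simp
      qed
    qed
  qed
  have "c + 1 = card (\<alpha> ` {t0..t0 + c})" using card_image[OF inj] by simp
  also have "\<dots> \<le> (\<Sum>m\<le>N t0. W m)"
  proof -
    have hq: "\<forall>i. t0 \<le> i \<and> i < t0 + c \<longrightarrow> Q i" using assms by blast
    have "t0 \<le> t0 + c" by simp
    then show ?thesis using run_card[of "N t0"] hq by blast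
  qed
  also have "\<dots> \<le> (\<Sum>m\<le>card A. W m)" using N_le[of t0] by (intro sum_mono2) auto
  also have "\<dots> \<le> 3 * fact (card A)" unfolding W_def by (rule sum_prod_le)
  finally show ?thesis by simp
qed


definition "Is = {t. Lk (Suc t) \<le> \<eta> * Lk t}"
definition "Gs = {t. \<gamma>max t \<ge> 1 \<or> \<gamma> t < \<gamma>max t}"

lemma prod_ge_rr: "rr \<le> (\<Prod>t<T. r t)"
proof -
  have "decseq (\<lambda>T. \<Prod>t<T. r t)"
  proof (rule decseq_SucI)
    fix n
    have "0 \<le> (\<Prod>t<n. r t)" using r_pos by (intro prod_nonneg) (simp add: less_imp_le)
    then have "(\<Prod>t<n. r t) * r n \<le> (\<Prod>t<n. r t)" using r_le1[of n] by (simp add: mult_left_le)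
    then show "(\<Prod>t<Suc n. r t) \<le> (\<Prod>t<n. r t)" by simp
  qed
  then show ?thesis using decseq_ge r_prod by blast
qed

lemma Lk_growth: "(\<Prod>t<T. r t) * \<eta> ^ card ({..<T} - Is) * Lk 0 \<le> Lk T"
proof (induction T)
  case 0 then show ?case by simp
next
  case (Suc T)
  define P where "P = (\<Prod>t<T. r t)"
  define b where "b = card ({..<T} - Is)"
  have P0: "0 \<le> P" unfolding P_def using r_pos by (intro prod_nonneg) (simp add: less_imp_le)
  have e0: "0 \<le> \<eta> ^ b" using eta by simp
  have L00: "0 \<le> Lk 0" using L0_pos by simp
  have rT: "0 < r T" "r T \<le> 1" using r_pos r_le1 by auto
  have IH: "P * \<eta> ^ b * Lk 0 \<le> Lk T" using Suc unfolding P_def b_def .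
  have fin: "finite ({..<T} - Is)" by simp
  have pS: "(\<Prod>t<Suc T. r t) = P * r T" unfolding P_def by simp
  show ?case
  proof (cases "T \<in> Is")
    case True
    then have "{..<Suc T} - Is = {..<T} - Is" by (auto simp: lessThan_Suc)
    then have "(\<Prod>t<Suc T. r t) * \<eta> ^ card ({..<Suc T} - Is) * Lk 0 = r T * (P * \<eta> ^ b * Lk 0)"
      unfolding b_def P_def by (simp add: algebra_simps)
    also have "\<dots> \<le> r T * Lk T" using IH rT by (intro mult_left_mono) auto
    also have "\<dots> \<le> Lk (Suc T)" by (rule Lk_ge)
    finally show ?thesis .
  next
    case False
    then have "{..<Suc T} - Is = insert T ({..<T} - Is)" by (auto simp: lessThan_Suc)
    then have c: "card ({..<Suc T} - Is) = Suc b" unfolding b_def using fin by simp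
    have big: "\<eta> * Lk T < Lk (Suc T)" using False unfolding Is_def by simp
    have "(\<Prod>t<Suc T. r t) * \<eta> ^ card ({..<Suc T} - Is) * Lk 0 = r T * (\<eta> * (P * \<eta> ^ b * Lk 0))"
      unfolding c P_def by (simp add: algebra_simps)
    also have "\<dots> \<le> r T * (\<eta> * Lk T)" using IH rT eta by (intro mult_left_mono) auto
    also have "\<dots> \<le> \<eta> * Lk T" using rT eta Lk_pos[of T] by (simp add: mult_left_le_one_le)
    also have "\<dots> \<le> Lk (Suc T)" using big by simp
    finally show ?thesis .
  qed
qed

lemma nonI_bound: "real (card ({..<T} - Is)) \<le> real_of_int \<lfloor>log \<eta> (L / (rr * Lk 0))\<rfloor>"
proof -
  define b where "b = card ({..<T} - Is)"
  have e0: "0 \<le> \<eta> ^ b" using eta by simp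
  have "rr * \<eta> ^ b * Lk 0 \<le> (\<Prod>t<T. r t) * \<eta> ^ b * Lk 0"
    using prod_ge_rr[of T] e0 L0_pos by (intro mult_right_mono) auto
  also have "\<dots> \<le> Lk T" using Lk_growth[of T] unfolding b_def .
  also have "\<dots> \<le> L" by (rule Lk_le_L)
  finally have "rr * \<eta> ^ b * Lk 0 \<le> L" .
  then have "\<eta> ^ b \<le> L / (rr * Lk 0)" using rr_pos L0_pos by (simp add: field_simps)
  moreover have "0 < L / (rr * Lk 0)" using rr_pos L0_pos Lk_pos[of 0] Lk_le_L[of 0] by simp
  ultimately have "real b \<le> log \<eta> (L / (rr * Lk 0))"
    using le_log_iff[OF eta(1)] powr_realpow[of \<eta> b] eta by simp
  then have "int b \<le> \<lfloor>log \<eta> (L / (rr * Lk 0))\<rfloor>" by (simp add: le_floor_iff)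
  then show ?thesis unfolding b_def by linarith
qed

lemma zero_G: "0 \<in> Gs"
proof -
  have "s 0 = x 0" using st(1)[of 0] by (auto simp: alpha0 split: if_splits)
  then have "\<gamma>max 0 = 1" by (simp add: gmax alpha0)
  then show ?thesis unfolding Gs_def by simp
qed

lemma count:
  "real (card (Gs \<inter> Is \<inter> {..t})) \<ge> real (t + 1) / (3 * fact (card A) + 1)
     - real_of_int \<lfloor>log \<eta> (L / (rr * Lk 0))\<rfloor>"
proof -
  define P where "P = Gs \<union> - Is"
  define M :: nat where "M = 3 * fact (card A)"
  have QP: "Q j" if "j \<notin> P" for j
    using that unfolding P_def Gs_def Is_def Q_def by auto
  have "card ({..t} - P) \<le> M * card ({..t} \<inter> P)"
  proof (rule interleave)
    show "0 \<in> P" using zero_G unfolding P_def by simp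
    fix a c :: nat assume "\<And>j. a \<le> j \<Longrightarrow> j < a + c \<Longrightarrow> j \<notin> P"
    then show "c \<le> M" unfolding M_def using run_len[of a c] QP by blast
  qed
  moreover have "card ({..t} - P) + card ({..t} \<inter> P) = t + 1"
  proof -
    have "{..t} = ({..t} - P) \<union> ({..t} \<inter> P)" by blast
    then have "card {..t} = card ({..t} - P) + card ({..t} \<inter> P)"
      by (metis card_Un_disjoint finite_Diff finite_Int finite_atMost Diff_disjoint inf_commute Int_Diff_disjoint)
    then show ?thesis by simp
  qed
  ultimately have t1: "t + 1 \<le> (M + 1) * card ({..t} \<inter> P)" by simp
  have "{..t} \<inter> P \<subseteq> (Gs \<inter> Is \<inter> {..t}) \<union> ({..<Suc t} - Is)"
    unfolding P_def by auto
  then have "card ({..t} \<inter> P) \<le> card ((Gs \<inter> Is \<inter> {..t}) \<union> ({..<Suc t} - Is))"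
    by (intro card_mono) auto
  also have "\<dots> \<le> card (Gs \<inter> Is \<inter> {..t}) + card ({..<Suc t} - Is)" by (rule card_Un_le)
  finally have cP: "real (card ({..t} \<inter> P)) \<le> real (card (Gs \<inter> Is \<inter> {..t})) + real_of_int \<lfloor>log \<eta> (L / (rr * Lk 0))\<rfloor>"
    using nonI_bound[of "Suc t"] by linarith
  have Mr: "real M + 1 = 3 * fact (card A) + 1" unfolding M_def by simp
  have "real (t + 1) \<le> (real M + 1) * real (card ({..t} \<inter> P))"
    using t1 by (metis of_nat_add of_nat_le_iff of_nat_mult of_nat_1)
  then have "real (t + 1) / (real M + 1) \<le> real (card ({..t} \<inter> P))"
    by (simp add: divide_le_eq mult.commute add_pos_nonneg)
  then have "real (t + 1) / (3 * fact (card A) + 1) \<le> real (card ({..t} \<inter> P))"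
    by (simp only: Mr)
  then show ?thesis using cP by linarith
qed

lemma G_infinite: "infinite Gs"
proof
  assume fin: "finite Gs"
  define K where "K = real_of_int \<lfloor>log \<eta> (L / (rr * Lk 0))\<rfloor>"
  define M where "M = 3 * fact (card A) + (1::real)"
  have M: "0 < M" unfolding M_def by (simp add: add_pos_nonneg)
  define t where "t = nat \<lceil>(real (card Gs) + \<bar>K\<bar> + 1) * M\<rceil>"
  have "(real (card Gs) + \<bar>K\<bar> + 1) * M \<le> real t" unfolding t_def by linarith
  then have "real (card Gs) + \<bar>K\<bar> + 1 \<le> real (t + 1) / M" using M
    by (simp add: le_divide_eq)
  moreover have "real (card (Gs \<inter> Is \<inter> {..t})) \<ge> real (t + 1) / M - K"
    using count[of t] unfolding M_def K_def .
  moreover have "card (Gs \<inter> Is \<inter> {..t}) \<le> card Gs" using fin by (intro card_mono) auto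
  ultimately show False by linarith
qed

end

theorem lemma7:
  fixes A :: "'a::euclidean_space set"
    and f :: "'a \<Rightarrow> real" and g :: "'a \<Rightarrow> 'a" and L :: real
    and \<eta> :: real and r :: "nat \<Rightarrow> real" and rr :: real
    and xm1 :: 'a and x v s d xb :: "nat \<Rightarrow> 'a"
    and \<gamma> \<gamma>max Lk :: "nat \<Rightarrow> real" and \<alpha> :: "nat \<Rightarrow> 'a \<Rightarrow> real"
    and xstar :: 'a
  assumes finA: "finite A" and neA: "A \<noteq> {}"
    and grad: "\<And>y. (f has_derivative (\<lambda>h. g y \<bullet> h)) (at y)"
    and lip: "\<And>y z. norm (g y - g z) \<le> L * norm (y - z)"
    and xstar: "xstar \<in> convex hull A" "\<And>y. y \<in> convex hull A \<Longrightarrow> f xstar \<le> f y"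
    and eta: "1 < \<eta>" "\<eta> < 2"
    and r_pos: "\<And>t. 0 < r t" and r_le1: "\<And>t. r t \<le> 1"
    and r_prod: "(\<lambda>T. \<Prod>t<T. r t) \<longlonglongrightarrow> rr" and rr_pos: "0 < rr"
    and xm1: "xm1 \<in> A"
    and x0: "x 0 \<in> A" "\<And>u. u \<in> A \<Longrightarrow> g xm1 \<bullet> x 0 \<le> g xm1 \<bullet> u"
    and L0: "Lk 0 = ell f g xm1 (x 0)" and L0_pos: "0 < Lk 0"
    and vt: "\<And>t. v t \<in> A" "\<And>t u. u \<in> A \<Longrightarrow> g (x t) \<bullet> v t \<le> g (x t) \<bullet> u"
    and alpha0: "\<alpha> 0 = (\<lambda>u. if u = x 0 then 1 else 0)"
    and st: "\<And>t. s t \<in> {u \<in> A. \<alpha> t u > 0}"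
      "\<And>t u. u \<in> {u \<in> A. \<alpha> t u > 0} \<Longrightarrow> g (x t) \<bullet> u \<le> g (x t) \<bullet> s t"
    and dt: "\<And>t. d t = s t - v t"
    and gmax: "\<And>t. \<gamma>max t = \<alpha> t (s t)"
    and gam: "\<And>t. \<gamma> t = min (g (x t) \<bullet> d t / (Lk t * (norm (d t))\<^sup>2)) (\<gamma>max t)"
    and xbar: "\<And>t. xb t = x t - \<gamma> t *\<^sub>R d t"
    and Lnext: "\<And>t. Lk (Suc t) = max (ell f g (x t) (xb t)) (r t * Lk t)"
    and xnext: "\<And>t. x (Suc t) = (if f (xb t) < f (x t) then xb t else x t)"
    and anext: "\<And>t. \<alpha> (Suc t) =
        (if f (xb t) < f (x t) then pfw_update (\<alpha> t) (s t) (v t) (\<gamma> t) else \<alpha> t)"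
  defines "G \<equiv> {t. \<gamma>max t \<ge> 1 \<or> \<gamma> t < \<gamma>max t}"
    and "I \<equiv> {t. Lk (Suc t) \<le> \<eta> * Lk t}"
  shows "(\<forall>t. norm (d t) \<le> diameter A \<and>
            (\<forall>c\<in>{0..\<gamma>max t}. x t - c *\<^sub>R d t \<in> convex hull A))
       \<and> infinite G
       \<and> (\<forall>t. real (card (G \<inter> I \<inter> {..t})) \<ge>
              real (t + 1) / (3 * fact (card A) + 1)
              - real_of_int \<lfloor>log \<eta> (L / (rr * Lk 0))\<rfloor>)
       \<and> (convex_on UNIV f \<longrightarrow> (\<forall>t. g (x t) \<bullet> d t \<ge> (f (x t) - f xstar) / 1))"
  proof -
  interpret acfw A f g L \<eta> r rr xm1 x v s d xb \<gamma> \<gamma>max Lk \<alpha> xstar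
    by unfold_locales (fact assms)+
  have GG: "G = Gs" unfolding G_def Gs_def ..
  have II: "I = Is" unfolding I_def Is_def ..
  show ?thesis
    unfolding GG II using part_i G_infinite count part_iii by blast
qed

end
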